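(* Let $K$ be an algebraically closed field of characteristic zero, $\mathcal{K}=K(t)$, $f(z) = z^2+t$, and $\alpha \in \mathcal{K}$. Then $\alpha$ does not realize portrait $(1,2)$ for $f$ if and only if $\alpha = 1/2$ or $\alpha$ satisfies condition $( * )$: \begin{itemize} \item $\alpha$ vanishes at $\mathfrak{p}_{-1}$; \item $\alpha^2 - \alpha + t + 1$ vanishes at $\mathfrak{p}_{-1}$, and possibly at $\mathfrak{p}_{-3/4}$, but at no other place; and \item if $\alpha^2 - \alpha + t + 1$ vanishes at $\mathfrak{p}_{-3/4}$, then $\alpha - 1/2$ also vanishes at $\mathfrak{p}_{-3/4}$. \end{itemize} Moreover, if in this case $\alpha^2-\alpha+t+1$ vanishes at $\mathfrak{p}_{-3/4}$, then it does so to order $1$.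
   Context: Places of $\mathcal{K}$ are those trivial on $K$, corresponding to $c\in\mathbb{P}^1(K)$; $\mathfrak{p}_c$ is the place at $t=c$, and an element vanishes at a place if its valuation there is positive. (Note $\alpha^2-\alpha+t+1 = \Phi_2(-\alpha,t)$ with $\Phi_2(z,t) = z^2+z+t+1$ the second dynatomic polynomial of $f$.) For $c \in K$, $f_c(z) = z^2+c$. A point $x$ has preperiodic portrait $(M,N)$ for $\phi$ if $M\ge0$ is minimal with $\phi^M(x)$ periodic and $\phi^M(x)$ has exact period $N$. We say $\alpha$ realizes portrait $(M,N)$ for $f$ if there exists $c \in K$ such that $\alpha(c)$ (reduction modulo $\mathfrak{p}_c$) has portrait $(M,N)$ for $f_c$. *)

theory Defs
  imports "HOL-Computational_Algebra.Polynomial" "HOL-Computational_Algebra.Fraction_Field"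
begin

text \<open>The rational function field K(t) is modelled as the fraction field
  'a poly fract of the polynomial ring K[t].  Places of K(t)/K correspond to
  points of P^1(K): a finite point c, or infinity.\<close>

datatype 'a place = Fin 'a | Infty

text \<open>Valuation of a nonzero rational function at a place, computed from any
  representation p/q (it is independent of the representation).\<close>
definition pval :: "'a::idom place \<Rightarrow> 'a poly \<Rightarrow> int" where
  "pval P p = (case P of Fin c \<Rightarrow> int (order c p) | Infty \<Rightarrow> - int (degree p))"

definition rf_val :: "'a::field place \<Rightarrow> 'a poly fract \<Rightarrow> int" where
  "rf_val P \<alpha> = (THE v. \<exists>p q. p \<noteq> 0 \<and> q \<noteq> 0 \<and> \<alpha> = Fract p q \<and> v = pval P p - pval P q)"

text \<open>An element vanishes at a place if its valuation there is positive
  (the zero element has valuation +infinity).\<close>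
definition vanishes_at :: "'a::field place \<Rightarrow> 'a poly fract \<Rightarrow> bool" where
  "vanishes_at P \<alpha> \<longleftrightarrow> \<alpha> = 0 \<or> rf_val P \<alpha> > 0"

definition regular_at :: "'a::field \<Rightarrow> 'a poly fract \<Rightarrow> bool" where
  "regular_at c \<alpha> \<longleftrightarrow> \<alpha> = 0 \<or> rf_val (Fin c) \<alpha> \<ge> 0"

definition eval_at :: "'a::field \<Rightarrow> 'a poly fract \<Rightarrow> 'a" where
  "eval_at c \<alpha> = (THE x. \<exists>p q. q \<noteq> 0 \<and> poly q c \<noteq> 0 \<and> \<alpha> = Fract p q \<and> x = poly p c / poly q c)"

definition tvar :: "'a::field poly fract" where
  "tvar = Fract [:0, 1:] 1"

definition is_periodic :: "('a \<Rightarrow> 'a) \<Rightarrow> 'a \<Rightarrow> bool" where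
  "is_periodic \<phi> y \<longleftrightarrow> (\<exists>n>0. (\<phi> ^^ n) y = y)"

definition exact_period :: "('a \<Rightarrow> 'a) \<Rightarrow> 'a \<Rightarrow> nat \<Rightarrow> bool" where
  "exact_period \<phi> y N \<longleftrightarrow> N > 0 \<and> (\<phi> ^^ N) y = y \<and> (\<forall>n. 0 < n \<and> n < N \<longrightarrow> (\<phi> ^^ n) y \<noteq> y)"

definition has_portrait :: "('a \<Rightarrow> 'a) \<Rightarrow> 'a \<Rightarrow> nat \<Rightarrow> nat \<Rightarrow> bool" where
  "has_portrait \<phi> x M N \<longleftrightarrow>
     is_periodic \<phi> ((\<phi> ^^ M) x) \<and> (\<forall>m<M. \<not> is_periodic \<phi> ((\<phi> ^^ m) x)) \<and>
     exact_period \<phi> ((\<phi> ^^ M) x) N"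

definition realizes :: "'a::field poly fract \<Rightarrow> nat \<Rightarrow> nat \<Rightarrow> bool" where
  "realizes \<alpha> M N \<longleftrightarrow>
     (\<exists>c. regular_at c \<alpha> \<and> has_portrait (\<lambda>z. z ^ 2 + c) (eval_at c \<alpha>) M N)"

end

theory Submission
  imports Defs
begin

lemma pval_mult: "x \<noteq> 0 \<Longrightarrow> y \<noteq> 0 \<Longrightarrow> pval P (x*y) = pval P x + pval P y"
  by (cases P) (auto simp: pval_def order_mult degree_mult_eq)

lemma rf_val_Fract:
  fixes a b :: "'a::field poly"
  assumes "a \<noteq> 0" "b \<noteq> 0"
  shows "rf_val P (Fract a b) = pval P a - pval P b"
  unfolding rf_val_def
proof (rule the_equality)
  show "\<exists>p q. p \<noteq> 0 \<and> q \<noteq> 0 \<and> Fract a b = Fract p q \<and> pval P a - pval P b = pval P p - pval P q"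
    using assms by blast
next
  fix v assume "\<exists>p q. p \<noteq> 0 \<and> q \<noteq> 0 \<and> Fract a b = Fract p q \<and> v = pval P p - pval P q"
  then obtain p q where h: "p \<noteq> 0" "q \<noteq> 0" "Fract a b = Fract p q" "v = pval P p - pval P q" by blast
  then have "a * q = p * b" using assms by (simp add: eq_fract)
  then have "pval P (a*q) = pval P (p*b)" by simp
  then have "pval P a + pval P q = pval P p + pval P b" using assms h by (simp add: pval_mult)
  then show "v = pval P a - pval P b" using h by simp
qed

lemma eval_at_Fract:
  fixes a b :: "'a::field poly"
  assumes "poly b c \<noteq> 0"
  shows "eval_at c (Fract a b) = poly a c / poly b c"
  unfolding eval_at_def
proof (rule the_equality)
  show "\<exists>p q. q \<noteq> 0 \<and> poly q c \<noteq> 0 \<and> Fract a b = Fract p q \<and> poly a c / poly b c = poly p c / poly q c"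
    using assms by (intro exI[of _ a] exI[of _ b]) auto
next
  fix x assume "\<exists>p q. q \<noteq> 0 \<and> poly q c \<noteq> 0 \<and> Fract a b = Fract p q \<and> x = poly p c / poly q c"
  then obtain p q where h: "q \<noteq> 0" "poly q c \<noteq> 0" "Fract a b = Fract p q" "x = poly p c / poly q c" by blast
  have b0: "b \<noteq> 0" using assms by auto
  then have "a * q = p * b" using h by (simp add: eq_fract)
  then have "poly a c * poly q c = poly p c * poly b c" by (metis poly_mult)
  then show "x = poly a c / poly b c" using h assms by (simp add: frac_eq_eq mult.commute)
qed

lemma portrait_iff:
  fixes x c :: "'a::field_char_0"
  shows "has_portrait (\<lambda>z. z ^ 2 + c) x 1 2 \<longleftrightarrow> x^2 - x + c + 1 = 0 \<and> x \<noteq> 0 \<and> 2*x \<noteq> 1"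
proof
  let ?f = "\<lambda>z::'a. z ^ 2 + c"
  assume "has_portrait ?f x 1 2"
  then have np: "\<not> is_periodic ?f x" and ep: "exact_period ?f (?f x) 2"
    by (auto simp: has_portrait_def)
  define y where "y = ?f x"
  have e1: "?f (?f y) = y" and e2: "?f y \<noteq> y" using ep unfolding y_def by (auto simp: exact_period_def numeral_2_eq_2)
  have fac: "?f (?f y) - y = (y^2 - y + c) * (y^2 + y + c + 1)" by (simp add: algebra_simps power2_eq_square)
  have "y^2 - y + c \<noteq> 0" using e2 by (auto simp: algebra_simps)
  moreover have "(y^2 - y + c) * (y^2 + y + c + 1) = 0" using e1 fac by simp
  ultimately have yq: "y^2 + y + c + 1 = 0" by simp
  define y2 where "y2 = ?f y"
  have "y2 - (- y - 1) = y^2 + y + c + 1" by (simp add: y2_def algebra_simps)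
  then have y2: "y2 = - y - 1" using yq by simp
  have "?f y2 = y" using e1 y2_def by simp
  then have "x^2 = y2^2" unfolding y_def by simp
  then have "x = y2 \<or> x = - y2" by (simp add: power2_eq_iff)
  moreover have "x \<noteq> y2"
  proof
    assume "x = y2"
    then have "(?f ^^ 2) x = x" by (simp add: numeral_2_eq_2 y2_def y_def)
    then have "is_periodic ?f x" unfolding is_periodic_def by (intro exI[of _ 2]) simp
    then show False using np by simp
  qed
  ultimately have xy: "x = - y2" by blast
  then have "x = y + 1" using y2 by simp
  then have "x^2 - x + c + 1 = 0" using y_def by (simp add: algebra_simps)
  moreover have "x \<noteq> 0" using xy \<open>x \<noteq> y2\<close> by auto
  moreover have "2*x \<noteq> 1"
  proof
    assume "2*x = 1"
    have "y2 - y = 1 - 2*x" unfolding y2 \<open>x = y + 1\<close> by (simp add: algebra_simps)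
    then have "y2 = y" using \<open>2*x = 1\<close> by simp
    then show False using e2 y2_def by simp
  qed
  ultimately show "x^2 - x + c + 1 = 0 \<and> x \<noteq> 0 \<and> 2*x \<noteq> 1" by blast
next
  let ?f = "\<lambda>z::'a. z ^ 2 + c"
  assume h: "x^2 - x + c + 1 = 0 \<and> x \<noteq> 0 \<and> 2*x \<noteq> 1"
  have c: "c = x - 1 - x^2" using h by (simp add: algebra_simps)
  have f1: "?f x = x - 1" by (simp add: c)
  have f2: "?f (x - 1) = - x" by (simp add: c algebra_simps power2_eq_square)
  have f3: "?f (- x) = x - 1" by (simp add: c)
  have orb: "(?f ^^ Suc n) x \<in> {x - 1, - x}" for n
    by (induction n) (auto simp: f1 f2 f3)
  have np: "\<not> is_periodic ?f x"
  proof
    assume "is_periodic ?f x"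
    then obtain n where "n > 0" "(?f ^^ n) x = x" by (auto simp: is_periodic_def)
    then obtain m where "(?f ^^ Suc m) x = x" by (metis gr0_implies_Suc)
    then have "x \<in> {x - 1, - x}" using orb[of m] by simp
    then show False using h by auto
  qed
  have t2: "\<And>y. (?f ^^ 2) y = ?f (?f y)" by (simp add: numeral_2_eq_2)
  have ne: "- x \<noteq> x - 1" using h by (auto simp: algebra_simps)
  have ep: "exact_period ?f (?f x) 2"
    unfolding exact_period_def
  proof (intro conjI allI impI)
    show "(?f ^^ 2) (?f x) = ?f x" by (simp only: t2 f1 f2 f3)
    fix n :: nat assume "0 < n \<and> n < 2"
    then have "n = 1" by auto
    then show "(?f ^^ n) (?f x) \<noteq> ?f x" using ne by (simp only: funpow.simps comp_apply id_apply One_nat_def f1 f2) simp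
  qed simp
  have h1: "(?f^^1) x = ?f x" by simp
  have ip: "is_periodic ?f (?f x)" using ep unfolding exact_period_def is_periodic_def by blast
  show "has_portrait ?f x 1 2" unfolding has_portrait_def h1
    using np ep ip by auto
qed

lemma Fract_eq_zero_iff:
  fixes a b :: "'a::idom"
  assumes "b \<noteq> 0" shows "Fract a b = 0 \<longleftrightarrow> a = 0"
  using assms by (simp add: Zero_fract_def eq_fract)

lemma vanishes_Fin:
  fixes a b :: "'a::field poly"
  assumes "b \<noteq> 0" "\<not> (poly a c = 0 \<and> poly b c = 0)"
  shows "vanishes_at (Fin c) (Fract a b) \<longleftrightarrow> poly a c = 0"
proof (cases "a = 0")
  case True then show ?thesis using assms by (simp add: vanishes_at_def Fract_eq_zero_iff)
next
  case False
  then have ne: "Fract a b \<noteq> 0" using assms by (simp add: Fract_eq_zero_iff)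
  have rf: "rf_val (Fin c) (Fract a b) = int (order c a) - int (order c b)"
    using False assms by (simp add: rf_val_Fract pval_def)
  show ?thesis
  proof (cases "poly a c = 0")
    case True
    then have "order c a \<noteq> 0" "order c b = 0" using False assms order_root by blast+
    then show ?thesis using rf ne True by (simp add: vanishes_at_def)
  next
    case F: False
    then have "order c a = 0" using order_root by blast
    then show ?thesis using rf ne F by (simp add: vanishes_at_def)
  qed
qed

lemma regular_Fract:
  fixes a b :: "'a::field poly"
  assumes "b \<noteq> 0" "\<not> (poly a c = 0 \<and> poly b c = 0)"
  shows "regular_at c (Fract a b) \<longleftrightarrow> poly b c \<noteq> 0"
proof (cases "a = 0")
  case True then show ?thesis using assms by (simp add: regular_at_def Fract_eq_zero_iff)
next
  case False
  then have ne: "Fract a b \<noteq> 0" using assms by (simp add: Fract_eq_zero_iff)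
  have rf: "rf_val (Fin c) (Fract a b) = int (order c a) - int (order c b)"
    using False assms by (simp add: rf_val_Fract pval_def)
  show ?thesis
  proof (cases "poly b c = 0")
    case True
    then have "order c b \<noteq> 0" "order c a = 0" using False assms order_root by blast+
    then show ?thesis using rf ne True by (simp add: regular_at_def)
  next
    case F: False
    then have "order c b = 0" using order_root by blast
    then show ?thesis using rf ne F by (simp add: regular_at_def)
  qed
qed

lemma not_vanishes_Infty:
  fixes a b :: "'a::field poly"
  assumes "b \<noteq> 0" "degree b < degree a"
  shows "\<not> vanishes_at Infty (Fract a b)"
proof -
  have a: "a \<noteq> 0" using assms by auto
  then show ?thesis using assms by (simp add: vanishes_at_def Fract_eq_zero_iff rf_val_Fract pval_def)
qed

lemma reduced_rep:
  fixes \<alpha> :: "'a::field poly fract"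
  shows "\<exists>p q. q \<noteq> 0 \<and> \<alpha> = Fract p q \<and> (\<forall>c. \<not> (poly p c = 0 \<and> poly q c = 0))"
proof -
  define S where "S = {n. \<exists>p q. q \<noteq> 0 \<and> \<alpha> = Fract p q \<and> degree q = n}"
  obtain p0 q0 where "\<alpha> = Fract p0 q0" "q0 \<noteq> 0" by (cases \<alpha>) auto
  then have "degree q0 \<in> S" unfolding S_def by blast
  then have "Least (\<lambda>n. n \<in> S) \<in> S" by (rule LeastI)
  then obtain p q where pq: "q \<noteq> 0" "\<alpha> = Fract p q" "degree q = Least (\<lambda>n. n \<in> S)"
    unfolding S_def by blast
  have "\<not> (poly p c = 0 \<and> poly q c = 0)" for c
  proof
    assume "poly p c = 0 \<and> poly q c = 0"
    then have "[:-c,1:] dvd p" "[:-c,1:] dvd q" by (simp_all add: poly_eq_0_iff_dvd)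
    then obtain p' q' where p': "p = [:-c,1:] * p'" and q': "q = [:-c,1:] * q'" by (auto elim!: dvdE)
    have q'0: "q' \<noteq> 0" using q' pq by auto
    have lin: "[:-c,1:] \<noteq> 0" by simp
    have "\<alpha> = Fract p' q'" using pq(2) p' q' mult_fract_cancel[OF lin] by metis
    then have "degree q' \<in> S" unfolding S_def using q'0 by blast
    then have "Least (\<lambda>n. n \<in> S) \<le> degree q'" by (rule Least_le)
    have "degree q = degree [:-c,1:] + degree q'" unfolding q' by (rule degree_mult_eq) (use q'0 in auto)
    moreover have "degree [:-c,1::'a:] = 1" by simp
    ultimately have "degree q = degree q' + 1" by simp
    with \<open>Least (\<lambda>n. n \<in> S) \<le> degree q'\<close> show False using pq by simp
  qed
  then show ?thesis using pq by blast
qed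

lemma degree_sq_form:
  fixes a b :: "'a::field poly"
  assumes "b \<noteq> 0" "k1 \<noteq> 0"
  shows "degree (a^2 + [:k0,k1:] * b^2) \<ge> 2 * degree b + 1"
proof -
  have L: "degree [:k0,k1:] = 1" using assms by simp
  have "degree ([:k0,k1:] * b^2) = degree [:k0,k1:] + degree (b^2)"
    by (rule degree_mult_eq) (use assms in auto)
  also have "\<dots> = 2 * degree b + 1" using L assms by (simp add: degree_power_eq)
  finally have db: "degree ([:k0,k1:] * b^2) = 2 * degree b + 1" .
  show ?thesis
  proof (cases "a = 0")
    case True then show ?thesis using db by simp
  next
    case False
    then have da: "degree (a^2) = 2 * degree a" by (simp add: degree_power_eq)
    show ?thesis
    proof (cases "degree a > degree b")
      case True
      then have "degree (a^2 + [:k0,k1:] * b^2) = degree (a^2)"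
        using da db by (intro degree_add_eq_left) simp
      then show ?thesis using da True by simp
    next
      case F: False
      then have "degree (a^2 + [:k0,k1:] * b^2) = degree ([:k0,k1:] * b^2)"
        using da db by (intro degree_add_eq_right) simp
      then show ?thesis using db by simp
    qed
  qed
qed

lemma order_lin: "order (-3/4 :: 'a::field_char_0) [:3/4,1:] = 1"
  using order_power_n_n[of "-3/4::'a" 1] by simp

lemma half_fract: "(1/2 :: 'a::field_char_0 poly fract) = Fract 1 2"
proof -
  have h: "(2 :: 'a poly fract) = Fract 2 1" by (metis of_nat_fract of_nat_numeral)
  show ?thesis unfolding One_fract_def h divide_fract by simp
qed

theorem lemma5p13:
  fixes \<alpha> :: "'a::field_char_0 poly fract"
  assumes alg_closed: "\<forall>p :: 'a poly. degree p > 0 \<longrightarrow> (\<exists>x. poly p x = 0)"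
  defines "D \<equiv> \<alpha>\<^sup>2 - \<alpha> + tvar + 1"
  shows "(\<not> realizes \<alpha> 1 2 \<longleftrightarrow>
           \<alpha> = 1 / 2 \<or>
           (vanishes_at (Fin (-1)) \<alpha> \<and>
            vanishes_at (Fin (-1)) D \<and>
            (\<forall>P. vanishes_at P D \<longrightarrow> P = Fin (-1) \<or> P = Fin (-3/4)) \<and>
            (vanishes_at (Fin (-3/4)) D \<longrightarrow> vanishes_at (Fin (-3/4)) (\<alpha> - 1/2))))
       \<and> (\<not> realizes \<alpha> 1 2 \<and> vanishes_at (Fin (-3/4)) D \<longrightarrow>
            D \<noteq> 0 \<and> rf_val (Fin (-3/4)) D = 1)"
proof -
  obtain p q where qnz: "q \<noteq> 0" and aF: "\<alpha> = Fract p q"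
    and nc': "\<forall>c. \<not> (poly p c = 0 \<and> poly q c = 0)" using reduced_rep by blast
  have nc: "\<not> (poly p c = 0 \<and> poly q c = 0)" for c using nc' by blast
  define N where "N = p^2 - p*q + [:1,1:]*q^2"
  define r where "r = 2 * p - q"
  have hN: "poly N c = (poly p c)^2 - poly p c * poly q c + (c+1)*(poly q c)^2" for c
    by (simp add: N_def algebra_simps)
  have hr: "poly r c = 2 * poly p c - poly q c" for c by (simp add: r_def)
  have id4: "smult 4 N = r^2 + [:3,4:]*q^2"
  proof -
    have "poly (smult 4 N) c = poly (r^2 + [:3,4:]*q^2) c" for c
      by (simp add: hN hr algebra_simps power2_eq_square)
    then show ?thesis by (simp add: poly_eq_poly_eq_iff[symmetric] fun_eq_iff)
  qed
  have Nq: "poly q c \<noteq> 0" if "poly N c = 0" for c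
    using nc[of c] that by (auto simp: hN)
  have degN: "degree N \<ge> 2 * degree q + 1"
  proof -
    have "degree (smult 4 N) \<ge> 2 * degree q + 1" unfolding id4
      by (rule degree_sq_form) (use qnz in auto)
    then show ?thesis by simp
  qed
  have Nnz: "N \<noteq> 0" using degN by auto
  have hD: "D = Fract N (q^2)"
    unfolding D_def aF tvar_def using qnz
    by (simp add: power2_eq_square One_fract_def eq_fract N_def algebra_simps)
  have hA: "\<alpha> - 1/2 = Fract r (2 * q)"
    unfolding aF half_fract using qnz
    by (simp add: eq_fract r_def algebra_simps)
  have hhalf: "\<alpha> = 1/2 \<longleftrightarrow> r = 0"
    unfolding aF half_fract using qnz
    by (simp add: eq_fract r_def algebra_simps)
  have vD: "vanishes_at (Fin c) D \<longleftrightarrow> poly N c = 0" for c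
    unfolding hD using qnz Nq[of c] by (intro vanishes_Fin) auto
  have vDI: "\<not> vanishes_at Infty D"
    unfolding hD using qnz degN by (intro not_vanishes_Infty) (auto simp: degree_power_eq)
  have vA: "vanishes_at (Fin c) \<alpha> \<longleftrightarrow> poly p c = 0" for c
    unfolding aF using qnz nc[of c] by (intro vanishes_Fin) auto
  have vH: "vanishes_at (Fin c) (\<alpha> - 1/2) \<longleftrightarrow> poly r c = 0" if "poly q c \<noteq> 0" for c
    unfolding hA using qnz that by (intro vanishes_Fin) auto
  have pc: "(regular_at c \<alpha> \<and> has_portrait (\<lambda>z. z ^ 2 + c) (eval_at c \<alpha>) 1 2) \<longleftrightarrow>
            (poly N c = 0 \<and> poly p c \<noteq> 0 \<and> poly r c \<noteq> 0)" for c
  proof (cases "poly q c = 0")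
    case True
    then show ?thesis using Nq[of c] regular_Fract[OF qnz nc[of c]] aF by auto
  next
    case False
    have reg: "regular_at c \<alpha>" using regular_Fract[OF qnz nc[of c]] aF False by simp
    have ev: "eval_at c \<alpha> = poly p c / poly q c" using aF False by (simp add: eval_at_Fract)
    define x where "x = poly p c / poly q c"
    have e1: "(x^2 - x + c + 1) * (poly q c)^2 = poly N c"
      using False by (simp add: x_def hN field_simps power2_eq_square)
    have e2: "x \<noteq> 0 \<longleftrightarrow> poly p c \<noteq> 0" using False by (simp add: x_def)
    have e3: "2*x \<noteq> 1 \<longleftrightarrow> poly r c \<noteq> 0" using False by (simp add: x_def hr field_simps)
    have "x^2 - x + c + 1 = 0 \<longleftrightarrow> poly N c = 0" using e1 False by (metis mult_eq_0_iff power_eq_0_iff)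
    then show ?thesis using reg ev e2 e3 portrait_iff[of c x] by (simp add: x_def)
  qed
  have real: "realizes \<alpha> 1 2 \<longleftrightarrow> (\<exists>c. poly N c = 0 \<and> poly p c \<noteq> 0 \<and> poly r c \<noteq> 0)"
    unfolding realizes_def using pc by blast
  have N4: "4 * poly N c = (poly r c)^2 + (4*c+3) * (poly q c)^2" for c
  proof -
    have "poly (smult 4 N) c = poly (r^2 + [:3,4:]*q^2) c" using id4 by simp
    then show ?thesis by (simp add: algebra_simps)
  qed
  have roots: "(c = -1 \<and> poly p c = 0) \<or> (c = -3/4 \<and> poly r c = 0)"
    if nR: "\<not> realizes \<alpha> 1 2" and Nc: "poly N c = 0" for c
  proof -
    have qc: "poly q c \<noteq> 0" using Nq Nc by blast
    have "poly p c = 0 \<or> poly r c = 0" using nR Nc real by blast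
    then show ?thesis
    proof
      assume pc0: "poly p c = 0"
      then have "(c+1) * (poly q c)^2 = 0" using Nc hN[of c] by simp
      then have "c + 1 = 0" using qc by simp
      then have "c = -1" by (simp add: eq_neg_iff_add_eq_0)
      then show ?thesis using pc0 by simp
    next
      assume rc0: "poly r c = 0"
      then have "(4*c+3) * (poly q c)^2 = 0" using Nc N4[of c] by simp
      then have "4*c+3 = 0" using qc by simp
      then have "4*c = -3" by (simp add: eq_neg_iff_add_eq_0)
      then have "c = -3/4" by (simp add: field_simps)
      then show ?thesis using rc0 by simp
    qed
  qed
  have Mex: "\<exists>M. smult 4 N = [:3/4,1:] * M \<and> poly M (-3/4) = 4 * (poly q (-3/4))^2 \<and>
                 (r \<noteq> 0 \<longrightarrow> degree M \<ge> 1)" if r34: "poly r (-3/4) = 0"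
  proof -
    have "[:3/4,1:] dvd r" using r34 by (simp add: dvd_iff_poly_eq_0)
    then obtain s where rs: "r = [:3/4,1:] * s" by (auto elim!: dvdE)
    define M where "M = (2*q)^2 + [:3/4,1:] * s^2"
    have e: "smult 4 N = [:3/4,1:] * M"
    proof -
      have "poly (smult 4 N) c = poly ([:3/4,1:] * M) c" for c
      proof -
        have "poly r c = (c + 3/4) * poly s c" using rs by (simp add: algebra_simps)
        then show ?thesis using N4[of c] by (simp add: M_def algebra_simps power2_eq_square)
      qed
      then show ?thesis by (simp add: poly_eq_poly_eq_iff[symmetric] fun_eq_iff)
    qed
    have v: "poly M (-3/4) = 4 * (poly q (-3/4))^2" by (simp add: M_def power2_eq_square)
    have "degree M \<ge> 1" if "r \<noteq> 0"
    proof -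
      have "s \<noteq> 0" using that rs by auto
      then have "degree M \<ge> 2 * degree s + 1" unfolding M_def by (rule degree_sq_form) simp
      then show ?thesis by simp
    qed
    then show ?thesis using e v by blast
  qed
  have ordpart: "rf_val (Fin (-3/4)) D = 1" if N34: "poly N (-3/4) = 0" and r34: "poly r (-3/4) = 0"
  proof -
    obtain M where M: "smult 4 N = [:3/4,1:] * M" "poly M (-3/4) = 4 * (poly q (-3/4))^2"
      using Mex[OF r34] by blast
    have q34: "poly q (-3/4) \<noteq> 0" using Nq N34 by blast
    have M0: "poly M (-3/4) \<noteq> 0" using M(2) q34 by simp
    then have Mnz: "M \<noteq> 0" by auto
    have lnz: "[:3/4,1::'a:] \<noteq> 0" by simp
    have "order (-3/4) N = order (-3/4) (smult 4 N)" by (simp add: order_smult)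
    also have "\<dots> = order (-3/4) [:3/4,1::'a:] + order (-3/4) M" unfolding M(1)
      by (rule order_mult) (metis lnz Mnz mult_eq_0_iff)
    also have "\<dots> = 1"
    proof -
      have "order (-3/4) M = 0" using M0 order_root by blast
      then show ?thesis using order_lin by simp
    qed
    finally have oN: "order (-3/4) N = 1" .
    have "poly (q^2) (-3/4) \<noteq> 0" using q34 by simp
    then have oq: "order (-3/4) (q^2) = 0" using order_root by blast
    show ?thesis unfolding hD using Nnz qnz oN oq by (simp add: rf_val_Fract pval_def)
  qed
  have Dnz: "D \<noteq> 0" unfolding hD using Nnz qnz by (simp add: Fract_eq_zero_iff)
  have m1: "(-1::'a) \<noteq> -3/4" by simp
  have dirA: "\<alpha> = 1 / 2 \<or>
           (vanishes_at (Fin (-1)) \<alpha> \<and>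
            vanishes_at (Fin (-1)) D \<and>
            (\<forall>P. vanishes_at P D \<longrightarrow> P = Fin (-1) \<or> P = Fin (-3/4)) \<and>
            (vanishes_at (Fin (-3/4)) D \<longrightarrow> vanishes_at (Fin (-3/4)) (\<alpha> - 1/2)))"
    if nR: "\<not> realizes \<alpha> 1 2"
  proof (cases "r = 0")
    case True then show ?thesis using hhalf by simp
  next
    case rnz: False
    have N1: "poly N (-1) = 0"
    proof (rule ccontr)
      assume N1: "poly N (-1) \<noteq> 0"
      have "degree N > 0" using degN by simp
      then obtain c0 where c0: "poly N c0 = 0" using alg_closed by blast
      then have "c0 = -3/4 \<and> poly r c0 = 0" using roots[OF nR c0] N1 by auto
      then have r34: "poly r (-3/4) = 0" and N34: "poly N (-3/4) = 0" using c0 by auto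
      obtain M where M: "smult 4 N = [:3/4,1:] * M" "poly M (-3/4) = 4 * (poly q (-3/4))^2" "degree M \<ge> 1"
        using Mex[OF r34] rnz by blast
      have "degree M > 0" using M(3) by simp
      then obtain c1 where c1: "poly M c1 = 0" using alg_closed by blast
      have "poly (smult 4 N) c1 = 0" unfolding M(1) using c1 by simp
      then have Nc1: "poly N c1 = 0" by simp
      have q34: "poly q (-3/4) \<noteq> 0" using Nq N34 by blast
      from roots[OF nR Nc1] show False
      proof
        assume "c1 = -1 \<and> poly p c1 = 0" then show False using N1 Nc1 by simp
      next
        assume "c1 = -3/4 \<and> poly r c1 = 0" then show False using c1 M(2) q34 by simp
      qed
    qed
    have p1: "poly p (-1) = 0" using roots[OF nR N1] m1 by auto
    have allP: "\<forall>P. vanishes_at P D \<longrightarrow> P = Fin (-1) \<or> P = Fin (-3/4)"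
    proof (intro allI impI)
      fix P assume vP: "vanishes_at P D"
      show "P = Fin (-1) \<or> P = Fin (-3/4)"
      proof (cases P)
        case (Fin c)
        then have "poly N c = 0" using vP vD by simp
        from roots[OF nR this] show ?thesis using Fin by (elim disjE) simp_all
      next
        case Infty then show ?thesis using vP vDI by simp
      qed
    qed
    have l34: "vanishes_at (Fin (-3/4)) (\<alpha> - 1/2)" if "vanishes_at (Fin (-3/4)) D"
    proof -
      have N34: "poly N (-3/4) = 0" using that vD by simp
      then have "poly r (-3/4) = 0" using roots[OF nR N34] m1 by auto
      then show ?thesis using vH Nq[OF N34] by simp
    qed
    show ?thesis using p1 N1 allP l34 vA vD by simp
  qed
  have dirB: "\<not> realizes \<alpha> 1 2" if h: "\<alpha> = 1 / 2 \<or>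
           (vanishes_at (Fin (-1)) \<alpha> \<and>
            vanishes_at (Fin (-1)) D \<and>
            (\<forall>P. vanishes_at P D \<longrightarrow> P = Fin (-1) \<or> P = Fin (-3/4)) \<and>
            (vanishes_at (Fin (-3/4)) D \<longrightarrow> vanishes_at (Fin (-3/4)) (\<alpha> - 1/2)))"
  proof
    assume "realizes \<alpha> 1 2"
    then obtain c where c: "poly N c = 0" "poly p c \<noteq> 0" "poly r c \<noteq> 0" using real by blast
    show False using h
    proof
      assume "\<alpha> = 1/2" then show False using hhalf c by simp
    next
      assume st: "vanishes_at (Fin (-1)) \<alpha> \<and>
            vanishes_at (Fin (-1)) D \<and>
            (\<forall>P. vanishes_at P D \<longrightarrow> P = Fin (-1) \<or> P = Fin (-3/4)) \<and>
            (vanishes_at (Fin (-3/4)) D \<longrightarrow> vanishes_at (Fin (-3/4)) (\<alpha> - 1/2))"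
      have "vanishes_at (Fin c) D" using c vD by simp
      then have "Fin c = Fin (-1) \<or> Fin c = Fin (-3/4)" using st by blast
      then have "c = -1 \<or> c = -3/4" by simp
      then show False
      proof
        assume "c = -1" then show False using st vA c by simp
      next
        assume c34: "c = -3/4"
        then have "vanishes_at (Fin (-3/4)) (\<alpha> - 1/2)" using st vD c by simp
        then show False using vH Nq[OF c(1)] c c34 by simp
      qed
    qed
  qed
  have part2: "D \<noteq> 0 \<and> rf_val (Fin (-3/4)) D = 1"
    if "\<not> realizes \<alpha> 1 2" "vanishes_at (Fin (-3/4)) D"
  proof -
    have N34: "poly N (-3/4) = 0" using that vD by simp
    then have "poly r (-3/4) = 0" using roots[OF that(1) N34] m1 by auto
    then show ?thesis using ordpart N34 Dnz by simp
  qed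
  show ?thesis using dirA dirB part2 by blast
qed

end
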